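(* Let $t\in\mathbb{Q}^\times$ and $E_t:\ v^2=u^3+(t^2+2)u^2+u$. Then $E_t$ is isomorphic over $\mathbb{Q}$ to the elliptic curve $$E:\ y^2+xy+ay=x^3+ax^2,\qquad a=-\frac{1}{4t^2},$$ on which $[4](0,0)=\mathcal{O}$, and $E$ is $4$-isogenous (over $\mathbb{Q}$) to the elliptic curve $$E':\ Y^2+XY+AY=X^3+AX^2,\qquad A=\frac{t^2+4}{64},$$ via an isogeny $\phi:E\to E'$ of degree $4$ with $\phi(0,0)=\mathcal{O}$. *)

theory Defs
  imports Complex_Main "HOL-Computational_Algebra.Polynomial"
begin

text \<open>Long Weierstrass equations
  y^2 + a1 x y + a3 y = x^3 + a2 x^2 + a4 x + a6,
  given by their coefficients (a1, a2, a3, a4, a6).\<close>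

datatype 'a wcurve = W 'a 'a 'a 'a 'a

text \<open>Points of the projective curve: None is the point at infinity O,
  Some (x, y) an affine point.\<close>

type_synonym 'a ecpoint = "('a \<times> 'a) option"

fun wmap :: "('a \<Rightarrow> 'b) \<Rightarrow> 'a wcurve \<Rightarrow> 'b wcurve" where
  "wmap f (W a1 a2 a3 a4 a6) = W (f a1) (f a2) (f a3) (f a4) (f a6)"

fun weq :: "'a::comm_ring_1 wcurve \<Rightarrow> 'a \<Rightarrow> 'a \<Rightarrow> 'a" where
  "weq (W a1 a2 a3 a4 a6) x y =
     y^2 + a1 * x * y + a3 * y - (x^3 + a2 * x^2 + a4 * x + a6)"

fun on_curve :: "'a::comm_ring_1 wcurve \<Rightarrow> 'a ecpoint \<Rightarrow> bool" where
  "on_curve E None = True"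
| "on_curve E (Some (x, y)) = (weq E x y = 0)"

text \<open>Discriminant (Silverman, III.1).\<close>

fun discriminant :: "'a::comm_ring_1 wcurve \<Rightarrow> 'a" where
  "discriminant (W a1 a2 a3 a4 a6) =
     (let b2 = a1^2 + 4 * a2;
          b4 = 2 * a4 + a1 * a3;
          b6 = a3^2 + 4 * a6;
          b8 = a1^2 * a6 + 4 * a2 * a6 - a1 * a3 * a4 + a2 * a3^2 - a4^2
      in - (b2^2 * b8) - 8 * b4^3 - 27 * b6^2 + 9 * b2 * b4 * b6)"

definition elliptic :: "'a::comm_ring_1 wcurve \<Rightarrow> bool" where
  "elliptic E \<longleftrightarrow> discriminant E \<noteq> 0"

text \<open>Group law (Silverman, Algorithm III.2.3), on points of the curve.\<close>

fun ec_add :: "'a::field wcurve \<Rightarrow> 'a ecpoint \<Rightarrow> 'a ecpoint \<Rightarrow> 'a ecpoint" where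
  "ec_add E None Q = Q"
| "ec_add E (Some p) None = Some p"
| "ec_add (W a1 a2 a3 a4 a6) (Some (x1, y1)) (Some (x2, y2)) =
     (if x1 = x2 \<and> y1 + y2 + a1 * x2 + a3 = 0 then None
      else
        (let lam = (if x1 = x2
                    then (3 * x1^2 + 2 * a2 * x1 + a4 - a1 * y1) / (2 * y1 + a1 * x1 + a3)
                    else (y2 - y1) / (x2 - x1));
             nu = (if x1 = x2
                   then (- (x1^3) + a4 * x1 + 2 * a6 - a3 * y1) / (2 * y1 + a1 * x1 + a3)
                   else (y1 * x2 - y2 * x1) / (x2 - x1));
             x3 = lam^2 + a1 * lam - a2 - x1 - x2;
             y3 = - (lam + a1) * x3 - nu - a3
         in Some (x3, y3)))"

fun ec_smul :: "'a::field wcurve \<Rightarrow> nat \<Rightarrow> 'a ecpoint \<Rightarrow> 'a ecpoint" where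
  "ec_smul E 0 P = None"
| "ec_smul E (Suc n) P = ec_add E P (ec_smul E n P)"

definition iso_over_Q :: "rat wcurve \<Rightarrow> rat wcurve \<Rightarrow> bool" where
  "iso_over_Q E E' \<longleftrightarrow>
     (\<exists>u r s t. u \<noteq> 0 \<and>
        (\<forall>x' y'. weq E (u^2 * x' + r) (u^3 * y' + s * u^2 * x' + t) = u^6 * weq E' x' y'))"

definition cpoly :: "rat poly \<Rightarrow> complex \<Rightarrow> complex" where
  "cpoly p z = poly (map_poly of_rat p) z"

text \<open>Isogeny over Q of degree d, viewed on complex points
  (C contains an algebraic closure of Q).  phi is a group homomorphism
  E(C) \<rightarrow> E'(C) which is given by rational functions with rational coefficients
  of the (always attainable) shape (x, y) \<mapsto> (R(x), S(x) y + T(x)) wherever these are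
  defined, and whose kernel over C has exactly d elements (in characteristic 0 every
  isogeny is separable, so the degree equals the size of the geometric kernel).\<close>

definition isogeny_over_Q ::
  "rat wcurve \<Rightarrow> rat wcurve \<Rightarrow> (complex ecpoint \<Rightarrow> complex ecpoint) \<Rightarrow> nat \<Rightarrow> bool" where
  "isogeny_over_Q E E' phi d \<longleftrightarrow>
     (let EC = wmap of_rat E; EC' = wmap of_rat E' in
       (\<forall>P. on_curve EC P \<longrightarrow> on_curve EC' (phi P)) \<and>
       (\<forall>P Q. on_curve EC P \<longrightarrow> on_curve EC Q \<longrightarrow>
              phi (ec_add EC P Q) = ec_add EC' (phi P) (phi Q)) \<and>
       (\<exists>Rn Rd Sn Sd Tn Td :: rat poly.
          Rd \<noteq> 0 \<and> Sd \<noteq> 0 \<and> Td \<noteq> 0 \<and>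
          (\<forall>x y. on_curve EC (Some (x, y)) \<longrightarrow>
                 cpoly Rd x \<noteq> 0 \<longrightarrow> cpoly Sd x \<noteq> 0 \<longrightarrow> cpoly Td x \<noteq> 0 \<longrightarrow>
                 phi (Some (x, y)) =
                   Some (cpoly Rn x / cpoly Rd x,
                         cpoly Sn x / cpoly Sd x * y + cpoly Tn x / cpoly Td x))) \<and>
       card {P. on_curve EC P \<and> phi P = None} = d)"

end

theory Submission
  imports Defs
begin


fun negp :: "complex wcurve \<Rightarrow> complex ecpoint \<Rightarrow> complex ecpoint" where
  "negp (W a1 a2 a3 a4 a6) None = None"
| "negp (W a1 a2 a3 a4 a6) (Some (x, y)) = Some (x, - y - a1 * x - a3)"

fun lt :: "complex wcurve \<Rightarrow> complex \<Rightarrow> complex \<Rightarrow> complex \<Rightarrow> complex \<Rightarrow> complex \<Rightarrow> bool" where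
  "lt (W a1 a2 a3 a4 a6) l n x1 x2 x3 =
     (x1 + x2 + x3 = l^2 + a1 * l - a2 \<and>
      x1 * x2 + x1 * x3 + x2 * x3 = a4 - 2 * l * n - a1 * n - a3 * l \<and>
      x1 * x2 * x3 = n^2 + a3 * n - a6)"

fun nonsing :: "complex wcurve \<Rightarrow> bool" where
  "nonsing (W a1 a2 a3 a4 a6) =
     (\<forall>x y. weq (W a1 a2 a3 a4 a6) x y = 0 \<longrightarrow> a1 * y - (3 * x^2 + 2 * a2 * x + a4) = 0
        \<longrightarrow> 2 * y + a1 * x + a3 = 0 \<longrightarrow> False)"

lemma weq_line:
  "weq (W a1 a2 a3 a4 a6) x (l * x + n) =
     - (x^3) + (l^2 + a1 * l - a2) * x^2 + (2 * l * n + a1 * n + a3 * l - a4) * x + (n^2 + a3 * n - a6)"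
  by (simp add: power2_eq_square power3_eq_cube algebra_simps)

lemma lt_on:
  assumes "lt (W a1 a2 a3 a4 a6) l n x1 x2 x3"
  shows "weq (W a1 a2 a3 a4 a6) x1 (l * x1 + n) = 0"
proof -
  have "weq (W a1 a2 a3 a4 a6) x1 (l * x1 + n) = - ((x1 - x1) * (x1 - x2) * (x1 - x3))"
    using assms unfolding weq_line by (simp add: power2_eq_square power3_eq_cube) algebra
  then show ?thesis by simp
qed

lemma lt_perm:
  "lt E l n x1 x2 x3 \<Longrightarrow> lt E l n x2 x1 x3"
  "lt E l n x1 x2 x3 \<Longrightarrow> lt E l n x1 x3 x2"
  by (cases E; simp add: algebra_simps)+

lemma add_fwd:
  assumes h1: "weq (W a1 a2 a3 a4 a6) x1 y1 = 0" and h2: "weq (W a1 a2 a3 a4 a6) x2 y2 = 0"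
    and nv: "\<not> (x1 = x2 \<and> y1 + y2 + a1 * x2 + a3 = 0)"
  shows "\<exists>l n x3. y1 = l * x1 + n \<and> y2 = l * x2 + n \<and> lt (W a1 a2 a3 a4 a6) l n x1 x2 x3 \<and>
    ec_add (W a1 a2 a3 a4 a6) (Some (x1, y1)) (Some (x2, y2)) = Some (x3, - (l + a1) * x3 - n - a3)"
proof (cases "x1 = x2")
  case False
  define l where "l = (y2 - y1) / (x2 - x1)"
  define n where "n = (y1 * x2 - y2 * x1) / (x2 - x1)"
  define x3 where "x3 = l^2 + a1 * l - a2 - x1 - x2"
  have d: "x2 - x1 \<noteq> 0" using False by simp
  have lm: "l * (x2 - x1) = y2 - y1" unfolding l_def using d by simp
  have nm: "n * (x2 - x1) = y1 * x2 - y2 * x1" unfolding n_def using d by simp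
  have "(y1 - (l * x1 + n)) * (x2 - x1) = 0" using lm nm by algebra
  then have e1: "y1 = l * x1 + n" using d by simp
  have "(y2 - (l * x2 + n)) * (x2 - x1) = 0" using lm nm by algebra
  then have e2: "y2 = l * x2 + n" using d by simp
  have g1: "- (x1^3) + (l^2 + a1 * l - a2) * x1^2 + (2 * l * n + a1 * n + a3 * l - a4) * x1 + (n^2 + a3 * n - a6) = 0"
    using h1 e1 weq_line by metis
  have g2: "- (x2^3) + (l^2 + a1 * l - a2) * x2^2 + (2 * l * n + a1 * n + a3 * l - a4) * x2 + (n^2 + a3 * n - a6) = 0"
    using h2 e2 weq_line by metis
  have x3d: "l^2 + a1 * l - a2 = x1 + x2 + x3" unfolding x3_def by simp
  have "(x1 - x2) * (x1 * x2 + x1 * x3 + x2 * x3 - (a4 - 2 * l * n - a1 * n - a3 * l)) = 0"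
    using g1 g2 x3d by algebra
  then have B: "x1 * x2 + x1 * x3 + x2 * x3 = a4 - 2 * l * n - a1 * n - a3 * l" using False by simp
  have C: "x1 * x2 * x3 = n^2 + a3 * n - a6" using g1 B x3d by algebra
  have lt: "lt (W a1 a2 a3 a4 a6) l n x1 x2 x3" using B C x3d by simp
  have "ec_add (W a1 a2 a3 a4 a6) (Some (x1, y1)) (Some (x2, y2)) = Some (x3, - (l + a1) * x3 - n - a3)"
    using False by (simp add: Let_def l_def n_def x3_def)
  then show ?thesis using e1 e2 lt by blast
next
  case True
  have h1': "weq (W a1 a2 a3 a4 a6) x2 y1 = 0" using h1 True by simp
  have "(y1 - y2) * (y1 + y2 + a1 * x2 + a3) = 0" using h1' h2 by (simp only: weq.simps) algebra
  with nv True have y: "y2 = y1" by simp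
  define D where "D = 2 * y1 + a1 * x1 + a3"
  have D: "D \<noteq> 0" using nv True y unfolding D_def by (auto simp: algebra_simps)
  define l where "l = (3 * x1^2 + 2 * a2 * x1 + a4 - a1 * y1) / D"
  define n where "n = (- (x1^3) + a4 * x1 + 2 * a6 - a3 * y1) / D"
  define x3 where "x3 = l^2 + a1 * l - a2 - x1 - x2"
  have lD: "l * D = 3 * x1^2 + 2 * a2 * x1 + a4 - a1 * y1" unfolding l_def using D by simp
  have nD: "n * D = - (x1^3) + a4 * x1 + 2 * a6 - a3 * y1" unfolding n_def using D by simp
  have "(y1 - (l * x1 + n)) * D = 0" using lD nD h1 unfolding D_def by (simp only: weq.simps) algebra
  then have e1: "y1 = l * x1 + n" using D by simp
  have g1: "- (x1^3) + (l^2 + a1 * l - a2) * x1^2 + (2 * l * n + a1 * n + a3 * l - a4) * x1 + (n^2 + a3 * n - a6) = 0"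
    using h1 e1 weq_line by metis
  have x3d: "l^2 + a1 * l - a2 = x1 + x1 + x3" unfolding x3_def using True by simp
  have g1': "- 3 * x1^2 + 2 * (l^2 + a1 * l - a2) * x1 + (2 * l * n + a1 * n + a3 * l - a4) = 0"
    using lD e1 unfolding D_def by algebra
  have B: "x1 * x1 + x1 * x3 + x1 * x3 = a4 - 2 * l * n - a1 * n - a3 * l" using g1' x3d by algebra
  have C: "x1 * x1 * x3 = n^2 + a3 * n - a6" using g1 B x3d by algebra
  have lt: "lt (W a1 a2 a3 a4 a6) l n x1 x2 x3" using B C x3d True by simp
  have ne: "\<not> (y1 + y1 + a1 * x1 + a3 = 0)" using D unfolding D_def by (simp add: algebra_simps)
  have "ec_add (W a1 a2 a3 a4 a6) (Some (x1, y1)) (Some (x2, y2)) = Some (x3, - (l + a1) * x3 - n - a3)"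
    using True y ne by (simp add: Let_def l_def n_def x3_def D_def)
  then show ?thesis using e1 y True lt by blast
qed

lemma add_conv:
  assumes ns: "nonsing (W a1 a2 a3 a4 a6)" and lt: "lt (W a1 a2 a3 a4 a6) l n x1 x2 x3"
    and y1: "y1 = l * x1 + n" and y2: "y2 = l * x2 + n"
  shows "ec_add (W a1 a2 a3 a4 a6) (Some (x1, y1)) (Some (x2, y2)) = Some (x3, - (l + a1) * x3 - n - a3)"
proof (cases "x1 = x2")
  case False
  have d: "x2 - x1 \<noteq> 0" using False by simp
  have L: "(y2 - y1) / (x2 - x1) = l"
  proof -
    have "y2 - y1 = l * (x2 - x1)" using y1 y2 by (simp add: algebra_simps)
    then show ?thesis using d by simp
  qed
  have N: "(y1 * x2 - y2 * x1) / (x2 - x1) = n"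
  proof -
    have "y1 * x2 - y2 * x1 = n * (x2 - x1)" using y1 y2 by (simp add: algebra_simps)
    then show ?thesis using d by simp
  qed
  have x3: "x3 = l^2 + a1 * l - a2 - x1 - x2" using lt by (simp add: algebra_simps)
  show ?thesis using False by (simp add: Let_def L N x3)
next
  case True
  have e: "x1 + x1 + x3 = l^2 + a1 * l - a2" "x1 * x1 + x1 * x3 + x1 * x3 = a4 - 2 * l * n - a1 * n - a3 * l"
    "x1 * x1 * x3 = n^2 + a3 * n - a6" using lt True by simp_all
  have on: "weq (W a1 a2 a3 a4 a6) x1 (l * x1 + n) = 0" using lt by (rule lt_on)
  define y where "y = l * x1 + n"
  define D where "D = 2 * y + a1 * x1 + a3"
  have on': "y^2 + a1 * x1 * y + a3 * y - (x1^3 + a2 * x1^2 + a4 * x1 + a6) = 0" using on unfolding y_def by simp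
  have g': "- 3 * x1^2 - 2 * a2 * x1 - a4 + a1 * y + l * D = 0"
    using e unfolding D_def y_def by algebra
  have Dn: "D \<noteq> 0"
  proof
    assume "D = 0"
    then have "a1 * y - (3 * x1^2 + 2 * a2 * x1 + a4) = 0" "2 * y + a1 * x1 + a3 = 0"
      using g' unfolding D_def by (simp_all add: algebra_simps)
    then show False using ns on' by auto
  qed
  have L: "(3 * x1^2 + 2 * a2 * x1 + a4 - a1 * y) / D = l"
  proof -
    have "3 * x1^2 + 2 * a2 * x1 + a4 - a1 * y = l * D" using g' by (simp add: algebra_simps)
    then show ?thesis using Dn by simp
  qed
  have N: "(- (x1^3) + a4 * x1 + 2 * a6 - a3 * y) / D = n"
  proof -
    have "- (x1^3) + a4 * x1 + 2 * a6 - a3 * y = n * D" using g' on' unfolding D_def y_def by algebra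
    then show ?thesis using Dn by simp
  qed
  have nv: "\<not> (y + y + a1 * x1 + a3 = 0)" using Dn unfolding D_def by (simp add: algebra_simps)
  have x3: "x3 = l^2 + a1 * l - a2 - x1 - x1" using e by (simp add: algebra_simps)
  have yy: "y1 = y" "y2 = y" using y1 y2 True unfolding y_def by simp_all
  have L': "(3 * x1^2 + 2 * a2 * x1 + a4 - a1 * y) / (2 * y + a1 * x1 + a3) = l" using L unfolding D_def .
  have N': "(- (x1^3) + a4 * x1 + 2 * a6 - a3 * y) / (2 * y + a1 * x1 + a3) = n" using N unfolding D_def .
  have nv': "(x1 = x1 \<and> y + y + a1 * x1 + a3 = 0) = False" using nv by simp
  show ?thesis unfolding yy True[symmetric]
    apply (subst ec_add.simps)
    apply (simp only: nv' if_False if_True refl Let_def L' N')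
    apply (simp add: x3 Dn[unfolded D_def])
    done
qed

lemma add_comm:
  assumes h1: "weq (W a1 a2 a3 a4 a6) x1 y1 = 0" and h2: "weq (W a1 a2 a3 a4 a6) x2 y2 = 0"
  shows "ec_add (W a1 a2 a3 a4 a6) (Some (x1, y1)) (Some (x2, y2)) =
         ec_add (W a1 a2 a3 a4 a6) (Some (x2, y2)) (Some (x1, y1))"
proof (cases "x1 = x2")
  case True
  have h1': "weq (W a1 a2 a3 a4 a6) x2 y1 = 0" using h1 True by simp
  have "(y1 - y2) * (y1 + y2 + a1 * x2 + a3) = 0" using h1' h2 by (simp only: weq.simps) algebra
  then have "y1 = y2 \<or> y1 + y2 + a1 * x2 + a3 = 0" by simp
  then show ?thesis
  proof
    assume "y1 = y2" then show ?thesis using True by simp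
  next
    assume v: "y1 + y2 + a1 * x2 + a3 = 0"
    then have "y2 + y1 + a1 * x1 + a3 = 0" using True by (simp add: algebra_simps)
    then show ?thesis using v True by simp
  qed
next
  case False
  have d: "x2 - x1 \<noteq> 0" "x1 - x2 \<noteq> 0" using False by auto
  have a: "(y2 - y1) / (x2 - x1) = (y1 - y2) / (x1 - x2)"
    using d by (simp add: field_simps)
  have b: "(y1 * x2 - y2 * x1) / (x2 - x1) = (y2 * x1 - y1 * x2) / (x1 - x2)"
    using d by (simp add: field_simps)
  show ?thesis using False
    apply (simp only: ec_add.simps a b)
    apply (simp add: Let_def algebra_simps)
    done
qed

lemma add_None_right: "ec_add E P None = P"
  by (cases P; cases E) auto

lemma on_curve_Some: "on_curve E (Some (x, y)) = (weq E x y = 0)" by simp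

theorem hom_generic:
  fixes phi :: "complex ecpoint \<Rightarrow> complex ecpoint"
  assumes ns1: "nonsing (W a1 a2 a3 a4 a6)" and ns2: "nonsing (W b1 b2 b3 b4 b6)"
    and H0: "phi None = None"
    and H2: "\<And>P. on_curve (W a1 a2 a3 a4 a6) P \<Longrightarrow>
                phi (negp (W a1 a2 a3 a4 a6) P) = negp (W b1 b2 b3 b4 b6) (phi P)"
    and H3: "\<And>P T. on_curve (W a1 a2 a3 a4 a6) P \<Longrightarrow> on_curve (W a1 a2 a3 a4 a6) T \<Longrightarrow>
                phi T = None \<Longrightarrow> phi (ec_add (W a1 a2 a3 a4 a6) P T) = phi P"
    and H4: "\<And>l n x1 x2 x3. lt (W a1 a2 a3 a4 a6) l n x1 x2 x3 \<Longrightarrow>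
               phi (Some (x1, l * x1 + n)) \<noteq> None \<Longrightarrow> phi (Some (x2, l * x2 + n)) \<noteq> None \<Longrightarrow>
               phi (Some (x3, l * x3 + n)) \<noteq> None \<Longrightarrow>
               \<exists>L N X1 X2 X3. lt (W b1 b2 b3 b4 b6) L N X1 X2 X3 \<and>
                  phi (Some (x1, l * x1 + n)) = Some (X1, L * X1 + N) \<and>
                  phi (Some (x2, l * x2 + n)) = Some (X2, L * X2 + N) \<and>
                  phi (Some (x3, l * x3 + n)) = Some (X3, L * X3 + N)"
    and P: "on_curve (W a1 a2 a3 a4 a6) P" and Q: "on_curve (W a1 a2 a3 a4 a6) Q"
  shows "phi (ec_add (W a1 a2 a3 a4 a6) P Q) = ec_add (W b1 b2 b3 b4 b6) (phi P) (phi Q)"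
proof (cases P)
  case None
  then show ?thesis using H0 by simp
next
  case (Some p)
  obtain x1 y1 where p: "P = Some (x1, y1)" using Some by (cases p) auto
  show ?thesis
  proof (cases Q)
    case None
    then show ?thesis using p H0 by (simp add: add_None_right)
  next
    case (Some q)
    obtain x2 y2 where q: "Q = Some (x2, y2)" using Some by (cases q) auto
    have c1: "weq (W a1 a2 a3 a4 a6) x1 y1 = 0" using P p by simp
    have c2: "weq (W a1 a2 a3 a4 a6) x2 y2 = 0" using Q q by simp
    show ?thesis
    proof (cases "phi P = None")
      case True
      have "phi (ec_add (W a1 a2 a3 a4 a6) P Q) = phi (ec_add (W a1 a2 a3 a4 a6) Q P)"
        using add_comm[OF c1 c2] p q by simp
      also have "\<dots> = phi Q" using H3[OF Q P True] .
      finally show ?thesis using True by simp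
    next
      case PnN: False
      show ?thesis
      proof (cases "phi Q = None")
        case True
        show ?thesis using H3[OF P Q True] True by (simp add: add_None_right)
      next
        case QnN: False
        show ?thesis
        proof (cases "x1 = x2 \<and> y1 + y2 + a1 * x2 + a3 = 0")
          case True
          then have lhs: "ec_add (W a1 a2 a3 a4 a6) P Q = None" using p q by simp
          have v: "y1 + y2 + a1 * x2 + a3 = 0" and xx: "x1 = x2" using True by auto
          have "y2 = - y1 - a1 * x2 - a3" using v by algebra
          then have "Q = negp (W a1 a2 a3 a4 a6) P" using p q xx by simp
          then have pq: "phi Q = negp (W b1 b2 b3 b4 b6) (phi P)" using H2[OF P] by simp
          obtain X Y where pP: "phi P = Some (X, Y)" using PnN by auto
          show ?thesis using lhs pq pP H0 by simp
        next
          case False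
          obtain l n x3 where y1: "y1 = l * x1 + n" and y2: "y2 = l * x2 + n"
            and lt: "lt (W a1 a2 a3 a4 a6) l n x1 x2 x3"
            and add: "ec_add (W a1 a2 a3 a4 a6) (Some (x1, y1)) (Some (x2, y2)) = Some (x3, - (l + a1) * x3 - n - a3)"
            using add_fwd[OF c1 c2 False] by blast
          define S where "S = Some (x3, l * x3 + n)"
          have Son: "on_curve (W a1 a2 a3 a4 a6) S"
            unfolding S_def using lt_on[OF lt_perm(1)[OF lt_perm(2)[OF lt_perm(1)[OF lt]]]] by simp
          have addS: "ec_add (W a1 a2 a3 a4 a6) P Q = negp (W a1 a2 a3 a4 a6) S"
            using add p q unfolding S_def by (simp add: algebra_simps)
          show ?thesis
          proof (cases "phi S = None")
            case True
            have lhs: "phi (ec_add (W a1 a2 a3 a4 a6) P Q) = None" using addS H2[OF Son] True by simp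
            have "ec_add (W a1 a2 a3 a4 a6) P S = Some (x2, - (l + a1) * x2 - n - a3)"
              using add_conv[OF ns1 lt_perm(2)[OF lt] y1] p unfolding S_def by simp
            also have "\<dots> = negp (W a1 a2 a3 a4 a6) Q" using q y2 by (simp add: algebra_simps)
            finally have "phi (negp (W a1 a2 a3 a4 a6) Q) = phi P" using H3[OF P Son True] by simp
            then have e: "negp (W b1 b2 b3 b4 b6) (phi Q) = phi P" using H2[OF Q] by simp
            obtain X Y where pQ: "phi Q = Some (X, Y)" using QnN by auto
            have pP: "phi P = Some (X, - Y - b1 * X - b3)" using e pQ by simp
            show ?thesis using lhs pP pQ by simp
          next
            case SnN: False
            obtain L N X1 X2 X3 where lt2: "lt (W b1 b2 b3 b4 b6) L N X1 X2 X3"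
              and i1: "phi (Some (x1, l * x1 + n)) = Some (X1, L * X1 + N)"
              and i2: "phi (Some (x2, l * x2 + n)) = Some (X2, L * X2 + N)"
              and i3: "phi (Some (x3, l * x3 + n)) = Some (X3, L * X3 + N)"
              using H4[OF lt] PnN QnN SnN p q y1 y2 unfolding S_def by blast
            have "ec_add (W b1 b2 b3 b4 b6) (phi P) (phi Q) = Some (X3, - (L + b1) * X3 - N - b3)"
              using add_conv[OF ns2 lt2 refl refl] i1 i2 p q y1 y2 by simp
            also have "\<dots> = negp (W b1 b2 b3 b4 b6) (phi S)" using i3 unfolding S_def by (simp add: algebra_simps)
            also have "\<dots> = phi (ec_add (W a1 a2 a3 a4 a6) P Q)" using addS H2[OF Son] by simp
            finally show ?thesis by simp
          qed
        qed
      qed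
    qed
  qed
qed

lemma nonsing_C:
  assumes "be \<noteq> 0" "al^2 - 4 * be \<noteq> 0"
  shows "nonsing (W 0 al 0 be 0)"
  using assms by (simp only: nonsing.simps weq.simps) (intro allI impI; algebra)

lemma nonsing_T:
  assumes "b \<noteq> 0" "16 * b - 1 \<noteq> 0"
  shows "nonsing (W 1 b b 0 0)"
  using assms by (simp only: nonsing.simps weq.simps) (intro allI impI; algebra)

definition isomap :: "complex \<Rightarrow> complex \<Rightarrow> complex \<Rightarrow> complex \<Rightarrow> complex ecpoint \<Rightarrow> complex ecpoint" where
  "isomap u r s t P = (case P of None \<Rightarrow> None
     | Some (x, y) \<Rightarrow> Some ((x - r) / u^2, (y - s * (x - r) - t) / u^3))"

locale isoloc =
  fixes u r s t a1 a2 a3 a4 a6 b1 b2 b3 b4 b6 :: complex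
  assumes u: "u \<noteq> 0"
    and hb1: "u * b1 = a1 + 2 * s"
    and hb2: "u^2 * b2 = a2 - s * a1 + 3 * r - s^2"
    and hb3: "u^3 * b3 = a3 + r * a1 + 2 * t"
    and hb4: "u^4 * b4 = a4 - s * a3 + 2 * r * a2 - (t + r * s) * a1 + 3 * r^2 - 2 * s * t"
    and hb6: "u^6 * b6 = a6 + r * a4 + r^2 * a2 + r^3 - t * a3 - t^2 - r * t * a1"
begin

lemma weq_iso: "weq (W a1 a2 a3 a4 a6) (u^2 * X + r) (u^3 * Y + s * u^2 * X + t) = u^6 * weq (W b1 b2 b3 b4 b6) X Y"
  using hb1 hb2 hb3 hb4 hb6 by (simp only: weq.simps) algebra


lemma iso_on: "on_curve (W a1 a2 a3 a4 a6) P \<Longrightarrow> on_curve (W b1 b2 b3 b4 b6) (isomap u r s t P)"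
proof (cases P)
  case (Some p)
  obtain x y where p: "P = Some (x, y)" using Some by (cases p) auto
  assume "on_curve (W a1 a2 a3 a4 a6) P"
  then have "weq (W a1 a2 a3 a4 a6) x y = 0" using p by simp
  then have "u^6 * weq (W b1 b2 b3 b4 b6) ((x - r) / u^2) ((y - s * (x - r) - t) / u^3) = 0"
    using weq_iso[where X = "(x - r) / u^2" and Y = "(y - s * (x - r) - t) / u^3"] u by simp
  then show ?thesis using p u by (simp add: isomap_def)
qed (simp add: isomap_def)

lemma iso_hom:
  assumes ns1: "nonsing (W a1 a2 a3 a4 a6)" and ns2: "nonsing (W b1 b2 b3 b4 b6)"
    and P: "on_curve (W a1 a2 a3 a4 a6) P" and Q: "on_curve (W a1 a2 a3 a4 a6) Q"
  shows "isomap u r s t (ec_add (W a1 a2 a3 a4 a6) P Q) =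
         ec_add (W b1 b2 b3 b4 b6) (isomap u r s t P) (isomap u r s t Q)"
proof (rule hom_generic[OF ns1 ns2 _ _ _ _ P Q])
  show "isomap u r s t None = None" by (simp add: isomap_def)
next
  fix P assume "on_curve (W a1 a2 a3 a4 a6) P"
  show "isomap u r s t (negp (W a1 a2 a3 a4 a6) P) = negp (W b1 b2 b3 b4 b6) (isomap u r s t P)"
  proof (cases P)
    case (Some p)
    obtain x y where p: "P = Some (x, y)" using Some by (cases p) auto
    have "(- y - a1 * x - a3 - s * (x - r) - t) / u^3 =
          - ((y - s * (x - r) - t) / u^3) - b1 * ((x - r) / u^2) - b3"
    proof -
      have "u^3 * ((- y - a1 * x - a3 - s * (x - r) - t) / u^3) =
            u^3 * (- ((y - s * (x - r) - t) / u^3) - b1 * ((x - r) / u^2) - b3)"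
      proof -
        have l: "u^3 * ((- y - a1 * x - a3 - s * (x - r) - t) / u^3) = - y - a1 * x - a3 - s * (x - r) - t"
          using u by simp
        have r: "u^3 * (- ((y - s * (x - r) - t) / u^3) - b1 * ((x - r) / u^2) - b3) =
                 - (y - s * (x - r) - t) - (u * b1) * (x - r) - u^3 * b3"
          using u by (simp add: field_simps power2_eq_square power3_eq_cube)
        show ?thesis unfolding l r using hb1 hb3 by algebra
      qed
      then show ?thesis using u by simp
    qed
    then show ?thesis using p by (simp add: isomap_def)
  qed (simp add: isomap_def)
next
  fix P T assume "on_curve (W a1 a2 a3 a4 a6) P" "isomap u r s t T = None"
  then have "T = None" by (cases T) (auto simp: isomap_def)
  then show "isomap u r s t (ec_add (W a1 a2 a3 a4 a6) P T) = isomap u r s t P"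
    by (simp add: add_None_right)
next
  fix l n x1 x2 x3 assume lt: "lt (W a1 a2 a3 a4 a6) l n x1 x2 x3"
  define L where "L = (l - s) / u"
  define N where "N = (l * r + n - t) / u^3"
  define X1 where "X1 = (x1 - r) / u^2"
  define X2 where "X2 = (x2 - r) / u^2"
  define X3 where "X3 = (x3 - r) / u^2"
  have xX: "x1 = u^2 * X1 + r" "x2 = u^2 * X2 + r" "x3 = u^2 * X3 + r"
    unfolding X1_def X2_def X3_def using u by simp_all
  have pt: "\<And>x X. x = u^2 * X + r \<Longrightarrow> isomap u r s t (Some (x, l * x + n)) = Some (X, L * X + N)"
  proof -
    fix x X assume xX: "x = u^2 * X + r"
    have "u^3 * (L * X + N) = (l * x + n - s * (x - r) - t)"
      unfolding xX L_def N_def using u by (simp add: field_simps power2_eq_square power3_eq_cube)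
    then have "(l * x + n - s * (x - r) - t) / u^3 = L * X + N" using u by (metis nonzero_mult_div_cancel_left power_not_zero)
    then show "isomap u r s t (Some (x, l * x + n)) = Some (X, L * X + N)"
      using u xX by (simp add: isomap_def)
  qed
  have e1: "x1 + x2 + x3 = l^2 + a1 * l - a2" and e2: "x1 * x2 + x1 * x3 + x2 * x3 = a4 - 2 * l * n - a1 * n - a3 * l"
    and e3: "x1 * x2 * x3 = n^2 + a3 * n - a6" using lt by simp_all
  have q1: "u^2 * (X1 + X2 + X3) = x1 + x2 + x3 - 3 * r"
    unfolding X1_def X2_def X3_def using u by (simp add: field_simps)
  have q2: "u^4 * (X1 * X2 + X1 * X3 + X2 * X3) = (x1 - r) * (x2 - r) + (x1 - r) * (x3 - r) + (x2 - r) * (x3 - r)"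
    unfolding X1_def X2_def X3_def using u by (simp add: field_simps)
  have q3: "u^6 * (X1 * X2 * X3) = (x1 - r) * (x2 - r) * (x3 - r)"
    unfolding X1_def X2_def X3_def using u by (simp add: field_simps)
  have ls: "l - s = u * L" unfolding L_def using u by simp
  have nt: "l * r + n - t = u^3 * N" unfolding N_def using u by simp
  have r1: "u^2 * (L^2 + b1 * L - b2) = (l - s)^2 + (u * b1) * (l - s) - u^2 * b2"
    unfolding ls by algebra
  have r2: "u^4 * (b4 - 2 * L * N - b1 * N - b3 * L) = u^4 * b4 - 2 * (l - s) * (l * r + n - t) - (u * b1) * (l * r + n - t) - (u^3 * b3) * (l - s)"
    unfolding ls nt by algebra
  have r3: "u^6 * (N^2 + b3 * N - b6) = (l * r + n - t)^2 + (u^3 * b3) * (l * r + n - t) - u^6 * b6"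
    unfolding nt by algebra
  have "u^2 * (X1 + X2 + X3) = u^2 * (L^2 + b1 * L - b2)"
    unfolding q1 r1 hb1 hb2 e1 by (simp add: algebra_simps power2_eq_square)
  moreover have "u^4 * (X1 * X2 + X1 * X3 + X2 * X3) = u^4 * (b4 - 2 * L * N - b1 * N - b3 * L)"
  proof -
    have "(x1 - r) * (x2 - r) + (x1 - r) * (x3 - r) + (x2 - r) * (x3 - r) =
          (x1 * x2 + x1 * x3 + x2 * x3) - 2 * r * (x1 + x2 + x3) + 3 * r^2" by (simp add: algebra_simps power2_eq_square)
    then show ?thesis unfolding q2 r2 hb1 hb3 hb4 e1 e2 by (simp add: algebra_simps power2_eq_square)
  qed
  moreover have "u^6 * (X1 * X2 * X3) = u^6 * (N^2 + b3 * N - b6)"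
  proof -
    have "(x1 - r) * (x2 - r) * (x3 - r) =
          x1 * x2 * x3 - r * (x1 * x2 + x1 * x3 + x2 * x3) + r^2 * (x1 + x2 + x3) - r^3"
      by (simp add: algebra_simps power2_eq_square power3_eq_cube)
    then show ?thesis unfolding q3 r3 hb3 hb6 e1 e2 e3 by (simp add: algebra_simps power2_eq_square power3_eq_cube)
  qed
  ultimately have "lt (W b1 b2 b3 b4 b6) L N X1 X2 X3" using u by simp
  then show "\<exists>L N X1 X2 X3. lt (W b1 b2 b3 b4 b6) L N X1 X2 X3 \<and>
                  isomap u r s t (Some (x1, l * x1 + n)) = Some (X1, L * X1 + N) \<and>
                  isomap u r s t (Some (x2, l * x2 + n)) = Some (X2, L * X2 + N) \<and>
                  isomap u r s t (Some (x3, l * x3 + n)) = Some (X3, L * X3 + N)"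
    using pt[OF xX(1)] pt[OF xX(2)] pt[OF xX(3)] by blast
qed

end


definition twoiso :: "complex \<Rightarrow> complex \<Rightarrow> complex ecpoint \<Rightarrow> complex ecpoint" where
  "twoiso al be P = (case P of None \<Rightarrow> None
     | Some (x, y) \<Rightarrow> if x = 0 then None else Some ((x^2 + al * x + be) / x, y * (be - x^2) / x^2))"

lemma twoiso_Some:
  assumes "x \<noteq> 0"
  shows "twoiso al be (Some (x, y)) = Some (x + al + be * (1 / x), y * (be * (1 / x)^2 - 1))"
  using assms by (simp add: twoiso_def field_simps power2_eq_square)

lemma twoiso_None_iff: "twoiso al be P = None \<longleftrightarrow> P = None \<or> (\<exists>y. P = Some (0, y))"
  by (cases P) (auto simp: twoiso_def split: if_splits)

locale twoloc =
  fixes al be :: complex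
  assumes be: "be \<noteq> 0" and disc: "al^2 - 4 * be \<noteq> 0"
begin

lemma ns1: "nonsing (W 0 al 0 be 0)" using nonsing_C be disc by simp

lemma ns2: "nonsing (W 0 (- 2 * al) 0 (al^2 - 4 * be) 0)"
proof (rule nonsing_C)
  show "al^2 - 4 * be \<noteq> 0" by (rule disc)
  have "(- 2 * al)^2 - 4 * (al^2 - 4 * be) = 16 * be" by (simp add: algebra_simps power2_eq_square)
  then show "(- 2 * al)^2 - 4 * (al^2 - 4 * be) \<noteq> 0" using be by simp
qed

lemma two_on: "on_curve (W 0 al 0 be 0) P \<Longrightarrow> on_curve (W 0 (- 2 * al) 0 (al^2 - 4 * be) 0) (twoiso al be P)"
proof (cases P)
  case (Some p)
  obtain x y where p: "P = Some (x, y)" using Some by (cases p) auto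
  assume "on_curve (W 0 al 0 be 0) P"
  then have c: "y^2 - (x^3 + al * x^2 + be * x) = 0" using p by simp
  show ?thesis
  proof (cases "x = 0")
    case True then show ?thesis using p by (simp add: twoiso_def)
  next
    case False
    define w where "w = 1 / x"
    have xw: "x * w = 1" using False unfolding w_def by simp
    have "weq (W 0 (- 2 * al) 0 (al^2 - 4 * be) 0) (x + al + be * w) (y * (be * w^2 - 1)) = 0"
      using c xw by (simp only: weq.simps) algebra
    then show ?thesis using p twoiso_Some[OF False] unfolding w_def by simp
  qed
qed (simp add: twoiso_def)

lemma two_hom:
  assumes P: "on_curve (W 0 al 0 be 0) P" and Q: "on_curve (W 0 al 0 be 0) Q"
  shows "twoiso al be (ec_add (W 0 al 0 be 0) P Q) =
         ec_add (W 0 (- 2 * al) 0 (al^2 - 4 * be) 0) (twoiso al be P) (twoiso al be Q)"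
proof (rule hom_generic[OF ns1 ns2 _ _ _ _ P Q])
  show "twoiso al be None = None" by (simp add: twoiso_def)
next
  fix P assume "on_curve (W 0 al 0 be 0) P"
  show "twoiso al be (negp (W 0 al 0 be 0) P) = negp (W 0 (- 2 * al) 0 (al^2 - 4 * be) 0) (twoiso al be P)"
    by (cases P) (auto simp: twoiso_def)
next
  fix P T assume P: "on_curve (W 0 al 0 be 0) P" and T: "on_curve (W 0 al 0 be 0) T"
    and TN: "twoiso al be T = None"
  show "twoiso al be (ec_add (W 0 al 0 be 0) P T) = twoiso al be P"
  proof (cases T)
    case None
    then show ?thesis by (simp add: add_None_right)
  next
    case (Some tp)
    then obtain y0 where t0: "T = Some (0, y0)" using TN twoiso_None_iff by auto
    then have "y0^2 = 0" using T by simp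
    then have T0: "T = Some (0, 0)" using t0 by simp
    show ?thesis
    proof (cases P)
      case None
      then show ?thesis using TN by (simp add: twoiso_def)
    next
      case (Some pp)
      obtain x y where p: "P = Some (x, y)" using Some by (cases pp) auto
      have c: "y^2 - (x^3 + al * x^2 + be * x) = 0" using P p by simp
      show ?thesis
      proof (cases "x = 0")
        case True
        then have "y^2 = 0" using c by simp
        then have "y = 0" by simp
        then show ?thesis using p T0 True by (simp add: twoiso_def)
      next
        case False
        define w where "w = 1 / x"
        have xw: "x * w = 1" using False unfolding w_def by simp
        have lam: "(0 - y) / (0 - x) = y * w" unfolding w_def by simp
        have nu: "(y * 0 - 0 * x) / (0 - x) = 0" by simp
        define x3 where "x3 = (y * w)^2 + 0 * (y * w) - al - x - 0"
        define y3 where "y3 = - (y * w + 0) * x3 - 0 - 0"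
        have add: "ec_add (W 0 al 0 be 0) P T = Some (x3, y3)"
          using False unfolding p T0 x3_def y3_def by (simp add: Let_def w_def divide_inverse)
        have x3w: "x3 = be * w" unfolding x3_def using c xw by algebra
        have x3n: "x3 \<noteq> 0" using x3w be xw by auto
        define ib where "ib = 1 / be"
        have bib: "be * ib = 1" using be unfolding ib_def by simp
        have inv3: "1 / x3 = x * ib" unfolding x3w ib_def w_def using be False
          by simp
        have A: "x3 + al + be * (x * ib) = x + al + be * w" unfolding x3w using bib by algebra
        have B: "y3 * (be * (x * ib)^2 - 1) = y * (be * w^2 - 1)"
          unfolding y3_def x3w using bib xw by algebra
        have "twoiso al be (ec_add (W 0 al 0 be 0) P T) = twoiso al be (Some (x3, y3))" using add by simp
        also have "\<dots> = Some (x3 + al + be * (1 / x3), y3 * (be * (1 / x3)^2 - 1))" by (rule twoiso_Some[OF x3n])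
        also have "\<dots> = Some (x + al + be * w, y * (be * w^2 - 1))" unfolding inv3 A B ..
        also have "\<dots> = twoiso al be P" unfolding p twoiso_Some[OF False] w_def ..
        finally show ?thesis .
      qed
    qed
  qed
next
  fix l n x1 x2 x3 assume lt: "lt (W 0 al 0 be 0) l n x1 x2 x3"
  assume n1: "twoiso al be (Some (x1, l * x1 + n)) \<noteq> None"
    and n2: "twoiso al be (Some (x2, l * x2 + n)) \<noteq> None"
    and n3: "twoiso al be (Some (x3, l * x3 + n)) \<noteq> None"
  have x1: "x1 \<noteq> 0" using n1 by (auto simp: twoiso_def)
  have x2: "x2 \<noteq> 0" using n2 by (auto simp: twoiso_def)
  have x3: "x3 \<noteq> 0" using n3 by (auto simp: twoiso_def)
  have e1: "x1 + x2 + x3 = l^2 - al" and e2: "x1 * x2 + x1 * x3 + x2 * x3 = be - 2 * l * n"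
    and e3: "x1 * x2 * x3 = n^2" using lt by simp_all
  have "n \<noteq> 0" using e3 x1 x2 x3 by auto
  define m where "m = 1 / n"
  have nm: "n * m = 1" unfolding m_def using \<open>n \<noteq> 0\<close> by simp
  define w1 where "w1 = 1 / x1"
  define w2 where "w2 = 1 / x2"
  define w3 where "w3 = 1 / x3"
  have xw: "x1 * w1 = 1" "x2 * w2 = 1" "x3 * w3 = 1" unfolding w1_def w2_def w3_def using x1 x2 x3 by simp_all
  define L where "L = be * m - l"
  define N where "N = l * al - n - be * l^2 * m"
  have pt: "\<And>x w. weq (W 0 al 0 be 0) x (l * x + n) = 0 \<Longrightarrow> x * w = 1 \<Longrightarrow>
      (l * x + n) * (be * w^2 - 1) = L * (x + al + be * w) + N"
  proof -
    fix x w assume c: "weq (W 0 al 0 be 0) x (l * x + n) = 0" and xw: "x * w = 1"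
    show "(l * x + n) * (be * w^2 - 1) = L * (x + al + be * w) + N"
      using c xw nm unfolding L_def N_def by (simp only: weq.simps) algebra
  qed
  have c1: "weq (W 0 al 0 be 0) x1 (l * x1 + n) = 0" using lt_on[OF lt] .
  have c2: "weq (W 0 al 0 be 0) x2 (l * x2 + n) = 0" using lt_on[OF lt_perm(1)[OF lt]] .
  have c3: "weq (W 0 al 0 be 0) x3 (l * x3 + n) = 0" using lt_on[OF lt_perm(1)[OF lt_perm(2)[OF lt_perm(1)[OF lt]]]] .
  have f1: "(x1 + al + be * w1) + (x2 + al + be * w2) + (x3 + al + be * w3) = L^2 + 0 * L - (- 2 * al)"
    using e1 e2 e3 xw nm unfolding L_def by algebra
  have f2: "(x1 + al + be * w1) * (x2 + al + be * w2) + (x1 + al + be * w1) * (x3 + al + be * w3) + (x2 + al + be * w2) * (x3 + al + be * w3)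
      = (al^2 - 4 * be) - 2 * L * N - 0 * N - 0 * L"
    using e1 e2 e3 xw nm unfolding L_def N_def by algebra
  have f3: "(x1 + al + be * w1) * (x2 + al + be * w2) * (x3 + al + be * w3) = N^2 + 0 * N - 0"
    using e1 e2 e3 xw nm unfolding N_def by algebra
  have "lt (W 0 (- 2 * al) 0 (al^2 - 4 * be) 0) L N (x1 + al + be * w1) (x2 + al + be * w2) (x3 + al + be * w3)"
    using f1 f2 f3 by simp
  moreover have "twoiso al be (Some (x1, l * x1 + n)) = Some (x1 + al + be * w1, L * (x1 + al + be * w1) + N)"
    using twoiso_Some[OF x1] pt[OF c1 xw(1)] unfolding w1_def by simp
  moreover have "twoiso al be (Some (x2, l * x2 + n)) = Some (x2 + al + be * w2, L * (x2 + al + be * w2) + N)"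
    using twoiso_Some[OF x2] pt[OF c2 xw(2)] unfolding w2_def by simp
  moreover have "twoiso al be (Some (x3, l * x3 + n)) = Some (x3 + al + be * w3, L * (x3 + al + be * w3) + N)"
    using twoiso_Some[OF x3] pt[OF c3 xw(3)] unfolding w3_def by simp
  ultimately show "\<exists>L N X1 X2 X3. lt (W 0 (- 2 * al) 0 (al^2 - 4 * be) 0) L N X1 X2 X3 \<and>
                  twoiso al be (Some (x1, l * x1 + n)) = Some (X1, L * X1 + N) \<and>
                  twoiso al be (Some (x2, l * x2 + n)) = Some (X2, L * X2 + N) \<and>
                  twoiso al be (Some (x3, l * x3 + n)) = Some (X3, L * X3 + N)" by blast
qed

end



locale spec =
  fixes tc :: complex
  assumes tc: "tc \<noteq> 0" and tc4: "tc^2 + 4 \<noteq> 0"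
begin

definition "ac = - 1 / (4 * tc^2)"
definition "Ac = (tc^2 + 4) / 64"
definition "al1 = 1/4 - 2 * ac"
definition "be1 = ac^2"
definition "al2 = 4 * ac + 1/4"
definition "be2 = ac"
definition "u3 = 4 / tc"
definition "r3 = u3^2 * Ac"
definition "s3 = u3 / 2"
definition "t3 = u3^3 * Ac / 2"

definition "phi = isomap u3 r3 s3 t3 \<circ> twoiso al2 be2 \<circ> isomap 1 (1/4) 0 0 \<circ> twoiso al1 be1 \<circ> isomap 1 (- ac) (- 1/2) 0"

lemma ac_rel: "4 * tc^2 * ac = -1" unfolding ac_def using tc by simp
lemma ac0: "ac \<noteq> 0" using ac_rel by auto
lemma ac16: "16 * ac - 1 \<noteq> 0"
proof
  assume "16 * ac - 1 = 0"
  then have "tc^2 * (16 * ac - 1) = 0" by simp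
  then have "tc^2 + 4 = 0" using ac_rel by algebra
  then show False using tc4 by simp
qed
lemma Ac0: "Ac \<noteq> 0" unfolding Ac_def using tc4 by simp
lemma Ac16: "16 * Ac - 1 \<noteq> 0" unfolding Ac_def using tc by (simp add: field_simps)

interpretation L1: twoloc al1 be1
proof
  show "be1 \<noteq> 0" unfolding be1_def using ac0 by simp
  have "al1^2 - 4 * be1 = 1/16 - ac" unfolding al1_def be1_def by (simp add: field_simps power2_eq_square)
  moreover have "1/16 - ac \<noteq> 0" using ac16 by (auto simp: field_simps)
  ultimately show "al1^2 - 4 * be1 \<noteq> 0" by simp
qed

interpretation L2: twoloc al2 be2
proof
  show "be2 \<noteq> 0" unfolding be2_def using ac0 by simp
  have "al2^2 - 4 * be2 = (4 * ac - 1/4)^2" unfolding al2_def be2_def by (simp add: field_simps power2_eq_square)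
  moreover have "4 * ac - 1/4 \<noteq> 0" using ac16 by (auto simp: field_simps)
  ultimately show "al2^2 - 4 * be2 \<noteq> 0" by simp
qed

interpretation I1: isoloc 1 "- ac" "- 1/2" 0 1 ac ac 0 0 0 al1 0 be1 0
  by unfold_locales (simp_all add: al1_def be1_def field_simps power2_eq_square power3_eq_cube)

interpretation I2: isoloc 1 "1/4" 0 0 0 "- 2 * al1" 0 "al1^2 - 4 * be1" 0 0 al2 0 be2 0
  by unfold_locales (simp_all add: al1_def be1_def al2_def be2_def field_simps power2_eq_square power3_eq_cube)

interpretation I3: isoloc u3 r3 s3 t3 0 "- 2 * al2" 0 "al2^2 - 4 * be2" 0 1 Ac Ac 0 0
proof
  show "u3 \<noteq> 0" unfolding u3_def using tc by simp
  show "u3 * 1 = 0 + 2 * s3" unfolding s3_def by simp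
  show "u3^3 * Ac = 0 + r3 * 0 + 2 * t3" unfolding t3_def by simp
  show "u3^2 * Ac = - 2 * al2 - s3 * 0 + 3 * r3 - s3^2"
    unfolding al2_def r3_def s3_def u3_def Ac_def using ac_rel tc by (simp add: field_simps) algebra
  show "u3^4 * 0 = al2^2 - 4 * be2 - s3 * 0 + 2 * r3 * (- 2 * al2) - (t3 + r3 * s3) * 0 + 3 * r3^2 - 2 * s3 * t3"
    unfolding al2_def be2_def r3_def s3_def t3_def u3_def Ac_def using ac_rel tc by (simp add: field_simps) algebra
  show "u3^6 * 0 = 0 + r3 * (al2^2 - 4 * be2) + r3^2 * (- 2 * al2) + r3^3 - t3 * 0 - t3^2 - r3 * t3 * 0"
    unfolding al2_def be2_def r3_def s3_def t3_def u3_def Ac_def using ac_rel tc by (simp add: field_simps) algebra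
qed

lemma nsE: "nonsing (W 1 ac ac 0 0)" using nonsing_T ac0 ac16 by simp
lemma nsE': "nonsing (W 1 Ac Ac 0 0)" using nonsing_T Ac0 Ac16 by simp

lemma phi_on: "on_curve (W 1 ac ac 0 0) P \<Longrightarrow> on_curve (W 1 Ac Ac 0 0) (phi P)"
  unfolding phi_def using I1.iso_on L1.two_on I2.iso_on L2.two_on I3.iso_on by simp

lemma phi_hom:
  assumes P: "on_curve (W 1 ac ac 0 0) P" and Q: "on_curve (W 1 ac ac 0 0) Q"
  shows "phi (ec_add (W 1 ac ac 0 0) P Q) = ec_add (W 1 Ac Ac 0 0) (phi P) (phi Q)"
proof -
  note h1 = I1.iso_hom[OF nsE L1.ns1 P Q]
  note P1 = I1.iso_on[OF P] and Q1 = I1.iso_on[OF Q]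
  note h2 = L1.two_hom[OF P1 Q1]
  note P2 = L1.two_on[OF P1] and Q2 = L1.two_on[OF Q1]
  note h3 = I2.iso_hom[OF L1.ns2 L2.ns1 P2 Q2]
  note P3 = I2.iso_on[OF P2] and Q3 = I2.iso_on[OF Q2]
  note h4 = L2.two_hom[OF P3 Q3]
  note P4 = L2.two_on[OF P3] and Q4 = L2.two_on[OF Q3]
  note h5 = I3.iso_hom[OF L2.ns2 nsE' P4 Q4]
  show ?thesis unfolding phi_def comp_def h1 h2 h3 h4 h5 ..
qed


definition "RnC x = ((-1/1024)) + x * (((1/128) * tc^2) + x * (((1/32) * tc^2 + (-1/64) * tc^4) + x * (((-1/8) * tc^4) + x * (((1/16) * tc^6)))))"
definition "RdC x = 0 + x * (0 + x * (((-1/4) * tc^2) + x * ((1 * tc^4))))"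
definition "SnC x = 0 + x * (((-1/8192) * tc^2) + x * (((5/4096) * tc^4) + x * (((-1/256) * tc^6) + x * (((1/256) * tc^8) + x * (((-1/128) * tc^8) + x * (((1/64) * tc^10)))))))"
definition "SdC x = 0 + x * (0 + x * (0 + x * (0 + x * (((1/16) * tc^3) + x * (((-1/2) * tc^5) + x * ((1 * tc^7)))))))"
definition "TnC x = 0 + x * (((1/65536)) + x * (((-1/8192) * tc^1 + (-7/32768) * tc^2) + x * (((3/2048) * tc^3 + (9/8192) * tc^4) + x * (((1/512) * tc^3 + (-13/2048) * tc^5 + (-5/2048) * tc^6) + x * (((-1/64) * tc^5 + (1/1024) * tc^6 + (3/256) * tc^7 + (1/512) * tc^8) + x * (((5/128) * tc^7 + (-3/512) * tc^8 + (-1/128) * tc^9) + x * (((-1/32) * tc^9 + (1/128) * tc^10))))))))"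

lemma phi_formula:
  assumes x0: "x \<noteq> 0" and xa: "x + ac \<noteq> 0"
  shows "\<exists>XX YY. phi (Some (x, y)) = Some (XX, YY) \<and> XX * RdC x = RnC x \<and> YY * SdC x = SnC x * y + TnC x"
proof -
  define v where "v = 1 / (x + ac)"
  define w where "w = 1 / x"
  have xv: "(x + ac) * v = 1" unfolding v_def using xa by simp
  have xw: "x * w = 1" unfolding w_def using x0 by simp
  have s1: "isomap 1 (- ac) (- 1/2) 0 (Some (x, y)) = Some (x + ac, y + (x + ac) / 2)"
    by (simp add: isomap_def field_simps)
  define X2 where "X2 = x^2 * v"
  define Y2 where "Y2 = (y + (x + ac) / 2) * (be1 * v^2 - 1)"
  have X2e: "(x + ac) + al1 + be1 * (1 / (x + ac)) - 1/4 = X2"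
    unfolding X2_def v_def[symmetric] al1_def be1_def using xv by algebra
  have s2: "(isomap 1 (1/4) 0 0 \<circ> twoiso al1 be1 \<circ> isomap 1 (- ac) (- 1/2) 0) (Some (x, y)) = Some (X2, Y2)"
  proof -
    have i2: "\<And>p q. isomap 1 (1/4) 0 0 (Some (p, q)) = Some (p - 1/4, q)" by (simp add: isomap_def)
    show ?thesis unfolding comp_def s1 twoiso_Some[OF xa] i2 X2e unfolding Y2_def v_def ..
  qed
  have X2n: "X2 \<noteq> 0" unfolding X2_def v_def using x0 xa by simp
  have iX2: "1 / X2 = (x + ac) * w^2" unfolding X2_def v_def w_def using x0 xa by (simp add: field_simps power2_eq_square)
  define X3 where "X3 = X2 + al2 + be2 * ((x + ac) * w^2)"
  define Y3 where "Y3 = Y2 * (be2 * ((x + ac) * w^2)^2 - 1)"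
  have s3: "phi (Some (x, y)) = isomap u3 r3 s3 t3 (Some (X3, Y3))"
  proof -
    have t2: "twoiso al2 be2 (Some (X2, Y2)) = Some (X3, Y3)"
      unfolding twoiso_Some[OF X2n] iX2 X3_def Y3_def ..
    show ?thesis using s2 t2 unfolding phi_def comp_def by simp
  qed
  define XX where "XX = X3 * tc^2 / 16 - Ac"
  define YY where "YY = Y3 * tc^3 / 64 - XX / 2 - Ac / 2"
  have s4: "isomap u3 r3 s3 t3 (Some (X3, Y3)) = Some (XX, YY)"
    unfolding isomap_def XX_def YY_def u3_def r3_def s3_def t3_def using tc by (simp add: field_simps; algebra)
  have X3e: "X3 * (x^2 * (x + ac)) = x^4 + (4 * ac + 1/4) * x^2 * (x + ac) + ac * (x + ac)^2"
    unfolding X3_def X2_def al2_def be2_def using xv xw by algebra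
  have Sdf: "SdC x = tc^7 * (x^4 * (x + ac)^2)" unfolding SdC_def ac_def using tc by (simp add: field_simps; algebra)
  have Rdf: "RdC x = tc^4 * (x^2 * (x + ac))" unfolding RdC_def ac_def using tc by (simp add: field_simps; algebra)
  have eX: "XX * RdC x = RnC x"
  proof -
    have "XX * RdC x = (X3 * (x^2 * (x + ac))) * tc^6 / 16 - Ac * RdC x"
      unfolding XX_def Rdf by algebra
    also have "\<dots> = RnC x" unfolding X3e Rdf unfolding RnC_def Ac_def ac_def using tc by (simp add: field_simps; algebra)
    finally show ?thesis .
  qed
  have Y2e: "Y2 * (x + ac)^2 = (y + (x + ac) / 2) * (ac^2 - (x + ac)^2)"
  proof -
    have "Y2 * (x + ac)^2 = (y + (x + ac) / 2) * (ac^2 * ((x + ac) * v)^2 - (x + ac)^2)"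
      unfolding Y2_def be1_def by algebra
    then show ?thesis unfolding xv by simp
  qed
  have Y3e: "Y3 * x^4 = Y2 * (ac * (x + ac)^2 - x^4)"
  proof -
    have "Y3 * x^4 = Y2 * (ac * (x + ac)^2 * (x * w)^4 - x^4)"
      unfolding Y3_def be2_def by algebra
    then show ?thesis unfolding xw by simp
  qed
  have Y3f: "Y3 * (x^4 * (x + ac)^2) = (y + (x + ac) / 2) * (ac^2 - (x + ac)^2) * (ac * (x + ac)^2 - x^4)"
  proof -
    have "Y3 * (x^4 * (x + ac)^2) = (Y3 * x^4) * (x + ac)^2" by (simp add: algebra_simps)
    also have "\<dots> = (Y2 * (x + ac)^2) * (ac * (x + ac)^2 - x^4)" unfolding Y3e by (simp add: algebra_simps)
    finally show ?thesis unfolding Y2e .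
  qed
  have XXS: "XX * SdC x = RnC x * (tc^3 * x^2 * (x + ac))"
  proof -
    have "XX * SdC x = (XX * RdC x) * (tc^3 * x^2 * (x + ac))" unfolding Sdf Rdf by algebra
    then show ?thesis unfolding eX .
  qed
  have Y3S: "Y3 * tc^3 / 64 * SdC x = tc^10 / 64 * ((y + (x + ac) / 2) * (ac^2 - (x + ac)^2) * (ac * (x + ac)^2 - x^4))"
  proof -
    have "Y3 * tc^3 / 64 * SdC x = tc^10 / 64 * (Y3 * (x^4 * (x + ac)^2))" unfolding Sdf by algebra
    then show ?thesis unfolding Y3f .
  qed
  have "YY * SdC x = Y3 * tc^3 / 64 * SdC x - XX * SdC x / 2 - Ac / 2 * SdC x"
    unfolding YY_def by (simp add: algebra_simps)
  also have "\<dots> = tc^10 / 64 * ((y + (x + ac) / 2) * (ac^2 - (x + ac)^2) * (ac * (x + ac)^2 - x^4))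
      - RnC x * (tc^3 * x^2 * (x + ac)) / 2 - Ac / 2 * SdC x"
    unfolding Y3S XXS ..
  also have "\<dots> = SnC x * y + TnC x"
    unfolding SnC_def TnC_def RnC_def SdC_def Ac_def ac_def using tc by (simp add: field_simps; algebra)
  finally have eY: "YY * SdC x = SnC x * y + TnC x" .
  show ?thesis using s3 s4 eX eY by auto
qed


lemma Rdf: "RdC x = tc^4 * (x^2 * (x + ac))" unfolding RdC_def ac_def using tc by (simp add: field_simps; algebra)
lemma Sdf: "SdC x = tc^7 * (x^4 * (x + ac)^2)" unfolding SdC_def ac_def using tc by (simp add: field_simps; algebra)

lemma stage1: "isomap 1 (- ac) (- 1/2) 0 (Some (x, y)) = Some (x + ac, y + (x + ac) / 2)"
  by (simp add: isomap_def field_simps)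

lemma phi_None_a: "x + ac = 0 \<Longrightarrow> phi (Some (x, y)) = None"
  unfolding phi_def comp_def stage1 by (simp add: twoiso_def isomap_def)

lemma phi_None_0: "phi (Some (0, y)) = None"
proof -
  have xa: "0 + ac \<noteq> 0" using ac0 by simp
  have X2e: "(0 + ac) + al1 + be1 * (1 / (0 + ac)) - 1/4 = 0"
    unfolding al1_def be1_def using ac0 by (simp add: field_simps power2_eq_square)
  have i2: "\<And>p q. isomap 1 (1/4) 0 0 (Some (p, q)) = Some (p - 1/4, q)" by (simp add: isomap_def)
  show ?thesis
    unfolding phi_def comp_def stage1 twoiso_Some[OF xa] i2 X2e by (simp add: twoiso_def isomap_def)
qed

lemma phi_None_iff:
  assumes on: "on_curve (W 1 ac ac 0 0) P"
  shows "phi P = None \<longleftrightarrow> P \<in> {None, Some (0, 0), Some (0, - ac), Some (- ac, 0)}"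
proof (cases P)
  case None
  then show ?thesis by (simp add: phi_def isomap_def twoiso_def)
next
  case (Some p)
  obtain x y where p: "P = Some (x, y)" using Some by (cases p) auto
  have c: "y^2 + x * y + ac * y - (x^3 + ac * x^2) = 0" using on p by simp
  show ?thesis
  proof (cases "x + ac = 0")
    case True
    then have xe: "x = - ac" by (simp add: eq_neg_iff_add_eq_0)
    have "y^2 = 0" using c unfolding xe by (simp add: algebra_simps power2_eq_square power3_eq_cube)
    then have "y = 0" by simp
    then show ?thesis using phi_None_a[OF True] p xe by simp
  next
    case xa: False
    show ?thesis
    proof (cases "x = 0")
      case True
      have "y * (y + ac) = 0" using c unfolding True by (simp add: algebra_simps power2_eq_square)
      then have "y = 0 \<or> y = - ac" by (auto simp: eq_neg_iff_add_eq_0)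
      then show ?thesis using phi_None_0 p True by auto
    next
      case False
      obtain XX YY where "phi (Some (x, y)) = Some (XX, YY)" using phi_formula[OF False xa] by blast
      moreover have "x \<noteq> - ac" using xa by (auto simp: eq_neg_iff_add_eq_0)
      ultimately show ?thesis using p False by auto
    qed
  qed
qed

lemma kernel_card: "card {P. on_curve (W 1 ac ac 0 0) P \<and> phi P = None} = 4"
proof -
  have "{P. on_curve (W 1 ac ac 0 0) P \<and> phi P = None} = {None, Some (0, 0), Some (0, - ac), Some (- ac, 0)}"
  proof (rule set_eqI)
    fix P
    show "P \<in> {P. on_curve (W 1 ac ac 0 0) P \<and> phi P = None} \<longleftrightarrow> P \<in> {None, Some (0, 0), Some (0, - ac), Some (- ac, 0)}"
    proof
      assume "P \<in> {P. on_curve (W 1 ac ac 0 0) P \<and> phi P = None}"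
      then show "P \<in> {None, Some (0, 0), Some (0, - ac), Some (- ac, 0)}" using phi_None_iff by blast
    next
      assume h: "P \<in> {None, Some (0, 0), Some (0, - ac), Some (- ac, 0)}"
      have on: "on_curve (W 1 ac ac 0 0) P" using h
        by (auto simp: power2_eq_square power3_eq_cube algebra_simps)
      then show "P \<in> {P. on_curve (W 1 ac ac 0 0) P \<and> phi P = None}" using phi_None_iff[OF on] h by simp
    qed
  qed
  then show ?thesis using ac0 by simp
qed

end


lemma cpoly_pCons: "cpoly (pCons c p) z = of_rat c + z * cpoly p z"
  by (simp add: cpoly_def map_poly_pCons)
lemma cpoly_0: "cpoly 0 z = 0" by (simp add: cpoly_def)

lemma disc_T: "discriminant (W 1 b b 0 0) = (b::rat)^4 * (1 - 16 * b)"
  by (simp add: Let_def; algebra)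

lemma disc_C: "discriminant (W 0 c 0 1 0) = 16 * ((c::rat)^2 - 4)"
  by (simp add: Let_def; algebra)

lemma smul4:
  assumes b: "(b::rat) \<noteq> 0"
  shows "ec_smul (W 1 b b 0 0) 4 (Some (0, 0)) = None"
proof -
  have h1: "ec_add (W 1 b b 0 0) (Some (0, 0)) None = Some (0, 0)" by simp
  have h2: "ec_add (W 1 b b 0 0) (Some (0, 0)) (Some (0, 0)) = Some (- b, 0)" using b by (simp add: Let_def)
  have h3: "ec_add (W 1 b b 0 0) (Some (0, 0)) (Some (- b, 0)) = Some (0, - b)" using b by (simp add: Let_def)
  have h4: "ec_add (W 1 b b 0 0) (Some (0, 0)) (Some (0, - b)) = None" by simp
  have "ec_smul (W 1 b b 0 0) 4 (Some (0, 0)) =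
        ec_add (W 1 b b 0 0) (Some (0, 0)) (ec_add (W 1 b b 0 0) (Some (0, 0))
          (ec_add (W 1 b b 0 0) (Some (0, 0)) (ec_add (W 1 b b 0 0) (Some (0, 0)) None)))"
    by (simp add: eval_nat_numeral)
  then show ?thesis unfolding h1 h2 h3 h4 .
qed

theorem proposition2p1:
  fixes t :: rat
  assumes "t \<noteq> 0"
  shows "let Et = W 0 (t^2 + 2) 0 1 0;
             a = - 1 / (4 * t^2);
             E = W 1 a a 0 0;
             A = (t^2 + 4) / 64;
             E' = W 1 A A 0 0
         in elliptic Et \<and> elliptic E \<and> elliptic E' \<and>
            iso_over_Q Et E \<and>
            on_curve E (Some (0, 0)) \<and> ec_smul E 4 (Some (0, 0)) = None \<and>
            (\<exists>phi. isogeny_over_Q E E' phi 4 \<and> phi (Some (0, 0)) = None)"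
proof -
  define a where "a = - 1 / (4 * t^2)"
  define A where "A = (t^2 + 4) / 64"
  have t0: "t \<noteq> 0" by (rule assms)
  have t4: "t^2 + 4 \<noteq> 0"
  proof -
    have "(0::rat) \<le> t^2" by simp
    then show ?thesis by linarith
  qed
  have a0: "a \<noteq> 0" unfolding a_def using t0 by simp
  have a16: "1 - 16 * a \<noteq> 0"
  proof -
    have "1 - 16 * a = (t^2 + 4) / t^2" unfolding a_def using t0 by (simp add: field_simps)
    then show ?thesis using t0 t4 by simp
  qed
  have A0: "A \<noteq> 0" unfolding A_def using t4 by simp
  have A16: "1 - 16 * A \<noteq> 0" unfolding A_def using t0 by (simp add: field_simps)
  have ell1: "elliptic (W 0 (t^2 + 2) 0 1 0)"
  proof -
    have "(t^2 + 2)^2 - 4 = t^2 * (t^2 + 4)" by algebra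
    then show ?thesis unfolding elliptic_def disc_C using t0 t4 by simp
  qed
  have ell2: "elliptic (W 1 a a 0 0)" unfolding elliptic_def disc_T using a0 a16 by simp
  have ell3: "elliptic (W 1 A A 0 0)" unfolding elliptic_def disc_T using A0 A16 by simp
  have ta: "4 * t^2 * a = - 1" unfolding a_def using t0 by simp
  have iso: "iso_over_Q (W 0 (t^2 + 2) 0 1 0) (W 1 a a 0 0)"
    unfolding iso_over_Q_def
    apply (rule exI[of _ "2 * t"], rule exI[of _ "- 1"], rule exI[of _ t], rule exI[of _ "- t"])
    apply (rule conjI)
    using t0 apply simp
    apply (intro allI)
    using ta apply (simp only: weq.simps)
    apply algebra
    done
  have on0: "on_curve (W 1 a a 0 0) (Some (0, 0))" by simp
  have sm: "ec_smul (W 1 a a 0 0) 4 (Some (0, 0)) = None" by (rule smul4[OF a0])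
  define tc where "tc = (of_rat t :: complex)"
  have tc0: "tc \<noteq> 0" unfolding tc_def using t0 by simp
  have tc4: "tc^2 + 4 \<noteq> 0"
  proof -
    have "tc^2 + 4 = of_rat (t^2 + 4)" unfolding tc_def by (simp add: of_rat_add of_rat_power)
    then show ?thesis using t4 by simp
  qed
  interpret S: spec tc using tc0 tc4 by unfold_locales
  have aE: "of_rat a = S.ac" unfolding S.ac_def a_def unfolding tc_def by (simp add: of_rat_divide of_rat_mult of_rat_power of_rat_minus)
  have AE: "of_rat A = S.Ac" unfolding S.Ac_def A_def unfolding tc_def by (simp add: of_rat_divide of_rat_add of_rat_power)
  have EC: "wmap of_rat (W 1 a a 0 0) = W 1 S.ac S.ac 0 0" using aE by simp
  have EC': "wmap of_rat (W 1 A A 0 0) = W 1 S.Ac S.Ac 0 0" using AE by simp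
  define Rn :: "rat poly" where "Rn = [:((-1/1024)), ((1/128) * t^2), ((1/32) * t^2 + (-1/64) * t^4), ((-1/8) * t^4), ((1/16) * t^6):]"
  define Rd :: "rat poly" where "Rd = [:0, 0, ((-1/4) * t^2), (1 * t^4):]"
  define Sn :: "rat poly" where "Sn = [:0, ((-1/8192) * t^2), ((5/4096) * t^4), ((-1/256) * t^6), ((1/256) * t^8), ((-1/128) * t^8), ((1/64) * t^10):]"
  define Sd :: "rat poly" where "Sd = [:0, 0, 0, 0, ((1/16) * t^3), ((-1/2) * t^5), (1 * t^7):]"
  define Tn :: "rat poly" where "Tn = [:0, ((1/65536)), ((-1/8192) * t^1 + (-7/32768) * t^2), ((3/2048) * t^3 + (9/8192) * t^4), ((1/512) * t^3 + (-13/2048) * t^5 + (-5/2048) * t^6), ((-1/64) * t^5 + (1/1024) * t^6 + (3/256) * t^7 + (1/512) * t^8), ((5/128) * t^7 + (-3/512) * t^8 + (-1/128) * t^9), ((-1/32) * t^9 + (1/128) * t^10):]"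
  have cRn: "cpoly Rn x = S.RnC x" for x
    unfolding Rn_def S.RnC_def unfolding tc_def by (simp add: cpoly_pCons cpoly_0 of_rat_add of_rat_mult of_rat_power of_rat_divide of_rat_minus of_rat_diff)
  have cRd: "cpoly Rd x = S.RdC x" for x
    unfolding Rd_def S.RdC_def unfolding tc_def by (simp add: cpoly_pCons cpoly_0 of_rat_add of_rat_mult of_rat_power of_rat_divide of_rat_minus of_rat_diff)
  have cSn: "cpoly Sn x = S.SnC x" for x
    unfolding Sn_def S.SnC_def unfolding tc_def by (simp add: cpoly_pCons cpoly_0 of_rat_add of_rat_mult of_rat_power of_rat_divide of_rat_minus of_rat_diff)
  have cSd: "cpoly Sd x = S.SdC x" for x
    unfolding Sd_def S.SdC_def unfolding tc_def by (simp add: cpoly_pCons cpoly_0 of_rat_add of_rat_mult of_rat_power of_rat_divide of_rat_minus of_rat_diff)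
  have cTn: "cpoly Tn x = S.TnC x" for x
    unfolding Tn_def S.TnC_def unfolding tc_def by (simp add: cpoly_pCons cpoly_0 of_rat_add of_rat_mult of_rat_power of_rat_divide of_rat_minus of_rat_diff)
  have Rd0: "Rd \<noteq> 0" unfolding Rd_def using t0 by simp
  have Sd0: "Sd \<noteq> 0" unfolding Sd_def using t0 by simp
  have rat: "\<forall>x y. on_curve (W 1 S.ac S.ac 0 0) (Some (x, y)) \<longrightarrow>
                 cpoly Rd x \<noteq> 0 \<longrightarrow> cpoly Sd x \<noteq> 0 \<longrightarrow> cpoly Sd x \<noteq> 0 \<longrightarrow>
                 S.phi (Some (x, y)) =
                   Some (cpoly Rn x / cpoly Rd x,
                         cpoly Sn x / cpoly Sd x * y + cpoly Tn x / cpoly Sd x)"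
  proof (intro allI impI)
    fix x y :: complex
    assume r: "cpoly Rd x \<noteq> 0" and s: "cpoly Sd x \<noteq> 0"
    have x0: "x \<noteq> 0" and xa: "x + S.ac \<noteq> 0" using r unfolding cRd S.Rdf by auto
    obtain XX YY where ph: "S.phi (Some (x, y)) = Some (XX, YY)" and eX: "XX * S.RdC x = S.RnC x"
      and eY: "YY * S.SdC x = S.SnC x * y + S.TnC x" using S.phi_formula[OF x0 xa] by blast
    have "XX = S.RnC x / S.RdC x" using eX r unfolding cRd by (simp add: eq_divide_eq)
    moreover have "YY = S.SnC x / S.SdC x * y + S.TnC x / S.SdC x" using eY s unfolding cSd
      by (simp add: field_simps)
    ultimately show "S.phi (Some (x, y)) =
                   Some (cpoly Rn x / cpoly Rd x,
                         cpoly Sn x / cpoly Sd x * y + cpoly Tn x / cpoly Sd x)"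
      unfolding ph cRn cRd cSn cSd cTn by simp
  qed
  have isog: "isogeny_over_Q (W 1 a a 0 0) (W 1 A A 0 0) S.phi 4"
    unfolding isogeny_over_Q_def Let_def EC EC'
  proof (intro conjI)
    show "\<forall>P. on_curve (W 1 S.ac S.ac 0 0) P \<longrightarrow> on_curve (W 1 S.Ac S.Ac 0 0) (S.phi P)"
      using S.phi_on by blast
    show "\<forall>P Q. on_curve (W 1 S.ac S.ac 0 0) P \<longrightarrow> on_curve (W 1 S.ac S.ac 0 0) Q \<longrightarrow>
              S.phi (ec_add (W 1 S.ac S.ac 0 0) P Q) = ec_add (W 1 S.Ac S.Ac 0 0) (S.phi P) (S.phi Q)"
      using S.phi_hom by blast
    show "\<exists>Rn Rd Sn Sd Tn Td :: rat poly.
          Rd \<noteq> 0 \<and> Sd \<noteq> 0 \<and> Td \<noteq> 0 \<and>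
          (\<forall>x y. on_curve (W 1 S.ac S.ac 0 0) (Some (x, y)) \<longrightarrow>
                 cpoly Rd x \<noteq> 0 \<longrightarrow> cpoly Sd x \<noteq> 0 \<longrightarrow> cpoly Td x \<noteq> 0 \<longrightarrow>
                 S.phi (Some (x, y)) =
                   Some (cpoly Rn x / cpoly Rd x,
                         cpoly Sn x / cpoly Sd x * y + cpoly Tn x / cpoly Td x))"
      using Rd0 Sd0 rat by blast
    show "card {P. on_curve (W 1 S.ac S.ac 0 0) P \<and> S.phi P = None} = 4" by (rule S.kernel_card)
  qed
  have ph0: "S.phi (Some (0, 0)) = None" by (rule S.phi_None_0)
  show ?thesis unfolding Let_def a_def[symmetric] A_def[symmetric]
    using ell1 ell2 ell3 iso on0 sm isog ph0 by blast
qed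


end
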